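(* Let $A$ be an MV-algebra and $d$ a $(\odot,\vee)$-derivation on $A$ with $d(1)\in\mathbf{B}(A)$. The following are equivalent: (1) $d$ is isotone (i.e. $x\le y$ implies $d(x)\le d(y)$); (2) $d(x)\le d(1)$ for all $x\in A$; (3) $d(x)=d(1)\odot x$ for all $x\in A$; (4) $d(x\wedge y)=d(x)\wedge d(y)$ for all $x,y\in A$; (5) $d(x\vee y)=d(x)\vee d(y)$ for all $x,y\in A$.
   Context: An MV-algebra is an algebra $(A,\oplus,{}^*,0)$ of type $(2,1,0)$ satisfying: $x\oplus(y\oplus z)=(x\oplus y)\oplus z$, $x\oplus y=y\oplus x$, $x\oplus 0=x$, $x^{**}=x$, $x\oplus 0^*=0^*$, $(x^*\oplus y)^*\oplus y=(y^*\oplus x)^*\oplus x$. Put $1=0^*$ and $x\odot y=(x^*\oplus y^* )^*$. The natural order is $x\le y$ iff $x^*\oplus y=1$, with lattice operations $x\vee y=(x\odot y^* )\oplus y$, $x\wedge y=x\odot(x^*\oplus y)$. The Boolean center is $\mathbf{B}(A)=\{x\in A: x\oplus x=x\}$. A $(\odot,\vee)$-derivation on $A$ is a map $d:A\to A$ with $d(x\odot y)=(d(x)\odot y)\vee(x\odot d(y))$ for all $x,y\in A$. *)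

theory Defs
  imports Main
begin

locale mv_algebra =
  fixes A :: "'a set"
    and oplus :: "'a \<Rightarrow> 'a \<Rightarrow> 'a"  (infixl "\<oplus>" 65)
    and neg :: "'a \<Rightarrow> 'a"
    and zero :: "'a"
  assumes oplus_closed: "\<lbrakk>x \<in> A; y \<in> A\<rbrakk> \<Longrightarrow> x \<oplus> y \<in> A"
    and neg_closed: "x \<in> A \<Longrightarrow> neg x \<in> A"
    and zero_closed: "zero \<in> A"
    and oplus_assoc: "\<lbrakk>x \<in> A; y \<in> A; z \<in> A\<rbrakk> \<Longrightarrow> x \<oplus> (y \<oplus> z) = (x \<oplus> y) \<oplus> z"
    and oplus_comm: "\<lbrakk>x \<in> A; y \<in> A\<rbrakk> \<Longrightarrow> x \<oplus> y = y \<oplus> x"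
    and oplus_zero: "x \<in> A \<Longrightarrow> x \<oplus> zero = x"
    and neg_neg: "x \<in> A \<Longrightarrow> neg (neg x) = x"
    and oplus_one: "x \<in> A \<Longrightarrow> x \<oplus> neg zero = neg zero"
    and luk: "\<lbrakk>x \<in> A; y \<in> A\<rbrakk> \<Longrightarrow> neg (neg x \<oplus> y) \<oplus> y = neg (neg y \<oplus> x) \<oplus> x"
begin

definition one :: 'a where "one = neg zero"

definition odot :: "'a \<Rightarrow> 'a \<Rightarrow> 'a" (infixl "\<odot>" 70)
  where "x \<odot> y = neg (neg x \<oplus> neg y)"

definition leq :: "'a \<Rightarrow> 'a \<Rightarrow> bool"
  where "leq x y \<longleftrightarrow> neg x \<oplus> y = one"

definition join :: "'a \<Rightarrow> 'a \<Rightarrow> 'a"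
  where "join x y = (x \<odot> neg y) \<oplus> y"

definition meet :: "'a \<Rightarrow> 'a \<Rightarrow> 'a"
  where "meet x y = x \<odot> (neg x \<oplus> y)"

definition boolean_center :: "'a set"
  where "boolean_center = {x \<in> A. x \<oplus> x = x}"

definition odot_join_derivation :: "('a \<Rightarrow> 'a) \<Rightarrow> bool"
  where "odot_join_derivation d \<longleftrightarrow> (\<forall>x\<in>A. d x \<in> A) \<and>
     (\<forall>x\<in>A. \<forall>y\<in>A. d (x \<odot> y) = join (d x \<odot> y) (x \<odot> d y))"

end

end

theory Submission
  imports Defs
begin

context mv_algebra
begin

declare oplus_closed[simp] neg_closed[simp] zero_closed[simp] neg_neg[simp]

lemma one_closed[simp]: "one \<in> A" unfolding one_def by simp
lemma odot_closed[simp]: "x \<in> A \<Longrightarrow> y \<in> A \<Longrightarrow> x \<odot> y \<in> A" unfolding odot_def by simp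
lemma join_closed[simp]: "x \<in> A \<Longrightarrow> y \<in> A \<Longrightarrow> join x y \<in> A" unfolding join_def by simp
lemma meet_closed[simp]: "x \<in> A \<Longrightarrow> y \<in> A \<Longrightarrow> meet x y \<in> A" unfolding meet_def by simp
lemma neg_zero[simp]: "neg zero = one" by (simp add: one_def)
lemma neg_one[simp]: "neg one = zero" unfolding one_def by (rule neg_neg[OF zero_closed])
lemma zero_oplus[simp]: "x \<in> A \<Longrightarrow> zero \<oplus> x = x" by (metis oplus_comm oplus_zero zero_closed)
lemma oplus_zero'[simp]: "x \<in> A \<Longrightarrow> x \<oplus> zero = x" by (rule oplus_zero)
lemma oplus_one'[simp]: "x \<in> A \<Longrightarrow> x \<oplus> one = one" using oplus_one[of x] unfolding one_def .
lemma one_oplus[simp]: "x \<in> A \<Longrightarrow> one \<oplus> x = one" by (metis oplus_comm oplus_one' one_closed)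
lemma oplus_lc: "x \<in> A \<Longrightarrow> y \<in> A \<Longrightarrow> z \<in> A \<Longrightarrow> x \<oplus> (y \<oplus> z) = y \<oplus> (x \<oplus> z)"
  by (metis oplus_assoc oplus_comm)

lemma neg_oplus_self[simp]: "x \<in> A \<Longrightarrow> neg x \<oplus> x = one"
  using luk[of x one] by simp
lemma oplus_neg_self[simp]: "x \<in> A \<Longrightarrow> x \<oplus> neg x = one"
  by (metis oplus_comm neg_oplus_self neg_closed)

lemma odot_comm: "x \<in> A \<Longrightarrow> y \<in> A \<Longrightarrow> x \<odot> y = y \<odot> x"
  unfolding odot_def by (simp add: oplus_comm)
lemma odot_assoc: "x \<in> A \<Longrightarrow> y \<in> A \<Longrightarrow> z \<in> A \<Longrightarrow> x \<odot> (y \<odot> z) = (x \<odot> y) \<odot> z"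
  unfolding odot_def by (simp add: oplus_assoc)
lemma odot_one[simp]: "x \<in> A \<Longrightarrow> x \<odot> one = x" unfolding odot_def by simp
lemma odot_zero[simp]: "x \<in> A \<Longrightarrow> x \<odot> zero = zero" unfolding odot_def by simp
lemma zero_odot[simp]: "x \<in> A \<Longrightarrow> zero \<odot> x = zero" unfolding odot_def by simp
lemma neg_odot: "x \<in> A \<Longrightarrow> y \<in> A \<Longrightarrow> neg (x \<odot> y) = neg x \<oplus> neg y"
  unfolding odot_def by simp
lemma odot_neg_self[simp]: "x \<in> A \<Longrightarrow> x \<odot> neg x = zero" unfolding odot_def by simp

lemma leq_iff: "x \<in> A \<Longrightarrow> y \<in> A \<Longrightarrow> leq x y \<longleftrightarrow> x \<odot> neg y = zero"
  unfolding leq_def odot_def by (metis neg_neg neg_zero neg_one oplus_closed neg_closed)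

lemma join_alt: "x \<in> A \<Longrightarrow> y \<in> A \<Longrightarrow> join x y = neg (neg x \<oplus> y) \<oplus> y"
  unfolding join_def odot_def by simp
lemma join_comm: "x \<in> A \<Longrightarrow> y \<in> A \<Longrightarrow> join x y = join y x"
  using luk by (simp add: join_alt)
lemma leq_join: "x \<in> A \<Longrightarrow> y \<in> A \<Longrightarrow> leq x y \<Longrightarrow> join x y = y"
  by (simp add: join_alt leq_def)
lemma leq_antisym: "x \<in> A \<Longrightarrow> y \<in> A \<Longrightarrow> leq x y \<Longrightarrow> leq y x \<Longrightarrow> x = y"
  by (metis leq_join join_comm)
lemma leq_refl: "x \<in> A \<Longrightarrow> leq x x" by (simp add: leq_def)
lemma leq_one: "x \<in> A \<Longrightarrow> leq x one" by (simp add: leq_def)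
lemma leq_zero: "x \<in> A \<Longrightarrow> leq x zero \<Longrightarrow> x = zero"
  by (metis leq_def oplus_zero' neg_closed neg_neg neg_one)

lemma join_upper2: "x \<in> A \<Longrightarrow> y \<in> A \<Longrightarrow> leq y (join x y)"
proof -
  assume a: "x \<in> A" "y \<in> A"
  have "neg y \<oplus> (neg (neg x \<oplus> y) \<oplus> y) = neg (neg x \<oplus> y) \<oplus> (neg y \<oplus> y)"
    using a by (intro oplus_lc) simp_all
  also have "\<dots> = one" using a by simp
  finally show ?thesis unfolding leq_def join_alt[OF a] .
qed
lemma join_upper1: "x \<in> A \<Longrightarrow> y \<in> A \<Longrightarrow> leq x (join x y)"
  by (metis join_upper2 join_comm)

lemma meet_alt: "x \<in> A \<Longrightarrow> y \<in> A \<Longrightarrow> meet x y = neg (join (neg x) (neg y))"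
proof -
  assume a: "x \<in> A" "y \<in> A"
  have "join (neg x) (neg y) = neg (x \<oplus> neg y) \<oplus> neg y" using a by (simp add: join_alt)
  also have "\<dots> = neg (y \<oplus> neg x) \<oplus> neg x" using a luk[of "neg x" "neg y"] by simp
  also have "\<dots> = neg x \<oplus> neg (neg x \<oplus> y)" using a by (simp add: oplus_comm)
  finally show ?thesis using a unfolding meet_def odot_def by simp
qed
lemma meet_comm: "x \<in> A \<Longrightarrow> y \<in> A \<Longrightarrow> meet x y = meet y x"
  by (simp add: meet_alt join_comm)
lemma meet_le2: "x \<in> A \<Longrightarrow> y \<in> A \<Longrightarrow> leq (meet x y) y"
proof -
  assume a: "x \<in> A" "y \<in> A"
  have "(neg (x \<oplus> neg y) \<oplus> neg y) \<oplus> y = neg (x \<oplus> neg y) \<oplus> (neg y \<oplus> y)"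
    using a by (intro oplus_assoc[symmetric]) simp_all
  also have "\<dots> = one" using a by simp
  finally show ?thesis using a unfolding leq_def meet_alt[OF a] join_alt[OF neg_closed[OF a(1)] neg_closed[OF a(2)]] by simp
qed
lemma meet_le1: "x \<in> A \<Longrightarrow> y \<in> A \<Longrightarrow> leq (meet x y) x"
  by (metis meet_le2 meet_comm)
lemma leq_meet: "x \<in> A \<Longrightarrow> y \<in> A \<Longrightarrow> leq x y \<Longrightarrow> meet x y = x"
  by (simp add: meet_def leq_def)

lemma leq_ex: "x \<in> A \<Longrightarrow> y \<in> A \<Longrightarrow> leq x y \<Longrightarrow> y = (y \<odot> neg x) \<oplus> x"
  by (metis leq_join join_comm join_def neg_neg)

lemma leq_trans: "x \<in> A \<Longrightarrow> y \<in> A \<Longrightarrow> z \<in> A \<Longrightarrow> leq x y \<Longrightarrow> leq y z \<Longrightarrow> leq x z"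
proof -
  assume a: "x \<in> A" "y \<in> A" "z \<in> A" "leq x y" "leq y z"
  define v where "v = y \<odot> neg x"
  define w where "w = z \<odot> neg y"
  have v: "v \<in> A" "y = v \<oplus> x" using a leq_ex[of x y] by (auto simp: v_def)
  have w: "w \<in> A" "z = w \<oplus> y" using a leq_ex[of y z] by (auto simp: w_def)
  have "neg x \<oplus> z = (w \<oplus> v) \<oplus> (neg x \<oplus> x)"
    using a v w by (simp add: oplus_assoc[symmetric] oplus_comm oplus_lc)
  then show ?thesis using a v w by (simp add: leq_def)
qed

lemma oplus_mono: "x \<in> A \<Longrightarrow> y \<in> A \<Longrightarrow> z \<in> A \<Longrightarrow> leq y z \<Longrightarrow> leq (x \<oplus> y) (x \<oplus> z)"
proof -
  assume a: "x \<in> A" "y \<in> A" "z \<in> A" "leq y z"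
  define w where "w = z \<odot> neg y"
  have w: "w \<in> A" "z = w \<oplus> y" using a leq_ex[of y z] by (auto simp: w_def)
  have "neg (x \<oplus> y) \<oplus> (x \<oplus> z) = w \<oplus> (neg (x \<oplus> y) \<oplus> (x \<oplus> y))"
    using a w by (simp add: oplus_assoc[symmetric] oplus_comm oplus_lc)
  then show ?thesis using a w by (simp add: leq_def)
qed
lemma neg_anti: "x \<in> A \<Longrightarrow> y \<in> A \<Longrightarrow> leq x y \<Longrightarrow> leq (neg y) (neg x)"
  by (simp add: leq_def oplus_comm)
lemma odot_mono: "x \<in> A \<Longrightarrow> y \<in> A \<Longrightarrow> z \<in> A \<Longrightarrow> leq y z \<Longrightarrow> leq (x \<odot> y) (x \<odot> z)"
proof -
  assume a: "x \<in> A" "y \<in> A" "z \<in> A" "leq y z"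
  have "leq (neg x \<oplus> neg z) (neg x \<oplus> neg y)" using a neg_anti oplus_mono by simp
  then have "leq (neg (neg x \<oplus> neg y)) (neg (neg x \<oplus> neg z))" using a neg_anti by simp
  then show ?thesis by (simp add: odot_def)
qed
lemma odot_le: "x \<in> A \<Longrightarrow> y \<in> A \<Longrightarrow> leq (x \<odot> y) x"
  using odot_mono[of x y one] leq_one by simp
lemma oplus_upper: "x \<in> A \<Longrightarrow> y \<in> A \<Longrightarrow> leq y (x \<oplus> y)"
  by (metis leq_def oplus_lc neg_closed neg_oplus_self oplus_one')

lemma join_lub: "x \<in> A \<Longrightarrow> y \<in> A \<Longrightarrow> z \<in> A \<Longrightarrow> leq x z \<Longrightarrow> leq y z \<Longrightarrow> leq (join x y) z"
proof -
  assume a: "x \<in> A" "y \<in> A" "z \<in> A" "leq x z" "leq y z"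
  have "leq (neg y \<odot> x) (neg y \<odot> z)" using a odot_mono by simp
  then have "leq (x \<odot> neg y) (z \<odot> neg y)" using a by (simp add: odot_comm)
  then have "leq (y \<oplus> (x \<odot> neg y)) (y \<oplus> (z \<odot> neg y))" using a oplus_mono by simp
  then have "leq (join x y) (join z y)" using a by (simp add: join_def oplus_comm)
  moreover have "join z y = z" using a by (metis leq_join join_comm)
  ultimately show ?thesis by simp
qed
lemma meet_glb: "x \<in> A \<Longrightarrow> y \<in> A \<Longrightarrow> z \<in> A \<Longrightarrow> leq z x \<Longrightarrow> leq z y \<Longrightarrow> leq z (meet x y)"
proof -
  assume a: "x \<in> A" "y \<in> A" "z \<in> A" "leq z x" "leq z y"
  have j: "leq (join (neg x) (neg y)) (neg z)" using a neg_anti join_lub by simp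
  have "leq (neg (neg z)) (neg (join (neg x) (neg y)))" by (rule neg_anti[OF _ _ j]) (use a in simp_all)
  then show ?thesis using a by (simp add: meet_alt)
qed

lemma ineq: "x \<in> A \<Longrightarrow> y \<in> A \<Longrightarrow> z \<in> A \<Longrightarrow> leq (x \<odot> (y \<oplus> z)) ((x \<odot> y) \<oplus> z)"
proof -
  assume a: "x \<in> A" "y \<in> A" "z \<in> A"
  have l: "neg x \<oplus> neg (neg x \<oplus> neg y) = neg (x \<oplus> y) \<oplus> y"
    using a luk[of y "neg x"] by (simp add: oplus_comm)
  have "neg (x \<odot> (y \<oplus> z)) \<oplus> ((x \<odot> y) \<oplus> z)
      = (neg x \<oplus> neg (neg x \<oplus> neg y)) \<oplus> (neg (y \<oplus> z) \<oplus> z)"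
    using a by (simp add: odot_def oplus_assoc[symmetric] oplus_comm oplus_lc)
  also have "\<dots> = neg (x \<oplus> y) \<oplus> (neg (y \<oplus> z) \<oplus> (y \<oplus> z))"
  proof -
    have "(neg (x \<oplus> y) \<oplus> y) \<oplus> (neg (y \<oplus> z) \<oplus> z) = neg (x \<oplus> y) \<oplus> (y \<oplus> (neg (y \<oplus> z) \<oplus> z))"
      using a by (intro oplus_assoc[symmetric]) simp_all
    also have "y \<oplus> (neg (y \<oplus> z) \<oplus> z) = neg (y \<oplus> z) \<oplus> (y \<oplus> z)"
      using a by (intro oplus_lc) simp_all
    finally show ?thesis by (simp only: l)
  qed
  finally show ?thesis using a by (simp add: leq_def)
qed

lemma bool_idem: "a \<in> A \<Longrightarrow> a \<oplus> a = a \<Longrightarrow> a \<odot> a = a"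
proof -
  assume a: "a \<in> A" "a \<oplus> a = a"
  have "join (neg a) a = one" using a by (simp add: join_alt)
  then have "join a (neg a) = one" using a join_comm by simp
  then have "(a \<odot> a) \<oplus> neg a = one" using a by (simp add: join_def)
  then have "leq a (a \<odot> a)" using a by (simp add: leq_def oplus_comm)
  then show ?thesis using a odot_le leq_antisym by simp
qed

lemma bool_meet: "a \<in> A \<Longrightarrow> a \<oplus> a = a \<Longrightarrow> z \<in> A \<Longrightarrow> meet a z = a \<odot> z"
proof -
  assume a: "a \<in> A" "a \<oplus> a = a" "z \<in> A"
  have 1: "leq (a \<odot> z) (meet a z)" unfolding meet_def
    using a odot_mono oplus_upper by simp
  have "meet a z = (a \<odot> a) \<odot> (neg a \<oplus> z)" using a bool_idem by (simp add: meet_def)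
  also have "\<dots> = a \<odot> meet a z" using a by (simp add: odot_assoc meet_def)
  finally have "leq (meet a z) (a \<odot> z)" using a odot_mono meet_le2
    by (metis meet_closed)
  then show ?thesis using 1 a leq_antisym by simp
qed

lemma bool_le: "a \<in> A \<Longrightarrow> a \<oplus> a = a \<Longrightarrow> z \<in> A \<Longrightarrow> w \<in> A \<Longrightarrow> leq z a \<Longrightarrow> leq z w \<Longrightarrow> leq z (a \<odot> w)"
proof -
  assume a: "a \<in> A" "a \<oplus> a = a" "z \<in> A" "w \<in> A" "leq z a" "leq z w"
  have "z = meet z a" using a leq_meet by simp
  also have "\<dots> = a \<odot> z" using a meet_comm bool_meet by simp
  finally show ?thesis using a odot_mono by metis
qed

lemma bool_dist_oplus: "a \<in> A \<Longrightarrow> a \<oplus> a = a \<Longrightarrow> u \<in> A \<Longrightarrow> v \<in> A \<Longrightarrow>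
    a \<odot> (u \<oplus> v) = (a \<odot> u) \<oplus> (a \<odot> v)"
proof -
  assume a: "a \<in> A" "a \<oplus> a = a" "u \<in> A" "v \<in> A"
  have e1: "a \<odot> (u \<oplus> v) = a \<odot> (a \<odot> (u \<oplus> v))" using a bool_idem by (simp add: odot_assoc)
  have i1: "leq (a \<odot> (u \<oplus> v)) ((a \<odot> u) \<oplus> v)" using a ineq by simp
  have i2: "leq (a \<odot> (a \<odot> (u \<oplus> v))) (a \<odot> ((a \<odot> u) \<oplus> v))"
    by (rule odot_mono[OF _ _ _ i1]) (use a in simp_all)
  have e2: "a \<odot> ((a \<odot> u) \<oplus> v) = a \<odot> (v \<oplus> (a \<odot> u))" using a by (simp add: oplus_comm)
  have i3: "leq (a \<odot> (v \<oplus> (a \<odot> u))) ((a \<odot> v) \<oplus> (a \<odot> u))" using a ineq by simp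
  have e3: "(a \<odot> v) \<oplus> (a \<odot> u) = (a \<odot> u) \<oplus> (a \<odot> v)" using a by (simp add: oplus_comm)
  have 1: "leq (a \<odot> (u \<oplus> v)) ((a \<odot> u) \<oplus> (a \<odot> v))"
    using i2 i3 leq_trans[of "a \<odot> (u \<oplus> v)" "a \<odot> (v \<oplus> (a \<odot> u))" "(a \<odot> u) \<oplus> (a \<odot> v)"] a
    unfolding e1[symmetric] e2 e3 by simp
  have au: "leq (a \<odot> u) a" "leq (a \<odot> v) a" using a odot_le by simp_all
  have ua: "leq (a \<odot> u) u" "leq (a \<odot> v) v" using a odot_le odot_comm by metis+
  have j1: "leq ((a \<odot> u) \<oplus> (a \<odot> v)) ((a \<odot> u) \<oplus> a)"
    by (rule oplus_mono[OF _ _ _ au(2)]) (use a in simp_all)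
  have j2: "leq (a \<oplus> (a \<odot> u)) (a \<oplus> a)"
    by (rule oplus_mono[OF _ _ _ au(1)]) (use a in simp_all)
  have 2: "leq ((a \<odot> u) \<oplus> (a \<odot> v)) a"
    using j1 j2 a leq_trans[of "(a \<odot> u) \<oplus> (a \<odot> v)" "(a \<odot> u) \<oplus> a" a] by (simp add: oplus_comm)
  have k1: "leq ((a \<odot> u) \<oplus> (a \<odot> v)) ((a \<odot> u) \<oplus> v)"
    by (rule oplus_mono[OF _ _ _ ua(2)]) (use a in simp_all)
  have k2: "leq (v \<oplus> (a \<odot> u)) (v \<oplus> u)"
    by (rule oplus_mono[OF _ _ _ ua(1)]) (use a in simp_all)
  have 3: "leq ((a \<odot> u) \<oplus> (a \<odot> v)) (u \<oplus> v)"
    using k1 k2 a leq_trans[of "(a \<odot> u) \<oplus> (a \<odot> v)" "(a \<odot> u) \<oplus> v" "u \<oplus> v"] by (simp add: oplus_comm)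
  have "leq ((a \<odot> u) \<oplus> (a \<odot> v)) (a \<odot> (u \<oplus> v))" using a 2 3 bool_le by simp
  then show ?thesis using 1 a leq_antisym by simp
qed

lemma bool_dist_join: "a \<in> A \<Longrightarrow> a \<oplus> a = a \<Longrightarrow> x \<in> A \<Longrightarrow> y \<in> A \<Longrightarrow>
    a \<odot> join x y = join (a \<odot> x) (a \<odot> y)"
proof -
  assume a: "a \<in> A" "a \<oplus> a = a" "x \<in> A" "y \<in> A"
  have "(a \<odot> x) \<odot> neg (a \<odot> y) = x \<odot> (a \<odot> (neg a \<oplus> neg y))"
    using a by (simp add: neg_odot odot_assoc odot_comm)
  also have "a \<odot> (neg a \<oplus> neg y) = a \<odot> neg y" using a bool_meet[of a "neg y"] by (simp add: meet_def)
  also have "x \<odot> (a \<odot> neg y) = a \<odot> (x \<odot> neg y)" using a by (metis odot_assoc odot_comm neg_closed)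
  finally have e: "(a \<odot> x) \<odot> neg (a \<odot> y) = a \<odot> (x \<odot> neg y)" .
  have "a \<odot> join x y = (a \<odot> (x \<odot> neg y)) \<oplus> (a \<odot> y)"
    unfolding join_def using a by (intro bool_dist_oplus) simp_all
  then show ?thesis unfolding join_def e .
qed

lemma bool_dist_meet: "a \<in> A \<Longrightarrow> a \<oplus> a = a \<Longrightarrow> x \<in> A \<Longrightarrow> y \<in> A \<Longrightarrow>
    a \<odot> meet x y = meet (a \<odot> x) (a \<odot> y)"
proof -
  assume a: "a \<in> A" "a \<oplus> a = a" "x \<in> A" "y \<in> A"
  have 1: "leq (a \<odot> meet x y) (meet (a \<odot> x) (a \<odot> y))"
    using a by (simp add: meet_glb odot_mono meet_le1 meet_le2)
  define m where "m = meet (a \<odot> x) (a \<odot> y)"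
  have m: "m \<in> A" using a by (simp add: m_def)
  have m1: "leq m (a \<odot> x)" "leq m (a \<odot> y)" using a meet_le1 meet_le2 by (simp_all add: m_def)
  have o: "leq (a \<odot> x) x" "leq (a \<odot> y) y" "leq (a \<odot> x) a"
    using a odot_le odot_comm by metis+
  have "leq m x" using leq_trans[OF m _ _ m1(1) o(1)] a by simp
  moreover have "leq m y" using leq_trans[OF m _ _ m1(2) o(2)] a by simp
  moreover have "leq m a" using leq_trans[OF m _ _ m1(1) o(3)] a by simp
  ultimately have "leq m (a \<odot> meet x y)" using a m meet_glb bool_le by simp
  then show ?thesis using 1 a m leq_antisym unfolding m_def by simp
qed

lemma join_zero: "join zero zero = zero" by (simp add: join_alt)

lemma deriv_zero: "odot_join_derivation d \<Longrightarrow> d zero = zero"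
  unfolding odot_join_derivation_def
  by (metis zero_closed odot_zero zero_odot join_zero)

lemma deriv_le: "odot_join_derivation d \<Longrightarrow> x \<in> A \<Longrightarrow> leq (d x) x"
proof -
  assume D: "odot_join_derivation d" and x: "x \<in> A"
  have dA: "\<And>y. y \<in> A \<Longrightarrow> d y \<in> A" using D by (simp add: odot_join_derivation_def)
  have "zero = d (x \<odot> neg x)" using x deriv_zero[OF D] by simp
  also have "\<dots> = join (d x \<odot> neg x) (x \<odot> d (neg x))"
    using D x neg_closed[OF x] unfolding odot_join_derivation_def by blast
  finally have "leq (d x \<odot> neg x) zero" using x dA join_upper1 by (metis neg_closed odot_closed)
  then have "d x \<odot> neg x = zero" using x dA leq_zero by simp
  then show ?thesis using x dA leq_iff by simp
qed

lemma deriv_lower: "odot_join_derivation d \<Longrightarrow> x \<in> A \<Longrightarrow> leq (x \<odot> d one) (d x)"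
proof -
  assume D: "odot_join_derivation d" and x: "x \<in> A"
  have dA: "\<And>y. y \<in> A \<Longrightarrow> d y \<in> A" using D by (simp add: odot_join_derivation_def)
  have "d x = d (x \<odot> one)" using x by simp
  also have "\<dots> = join (d x \<odot> one) (x \<odot> d one)"
    using D x one_closed unfolding odot_join_derivation_def by blast
  finally have "d x = join (d x) (x \<odot> d one)" using x dA by simp
  then show ?thesis using x dA join_upper2 by (metis one_closed odot_closed)
qed

lemma main:
  assumes D: "odot_join_derivation d" and B: "d one \<in> boolean_center"
  shows "((\<forall>x\<in>A. \<forall>y\<in>A. leq x y \<longrightarrow> leq (d x) (d y)) \<longleftrightarrow> (\<forall>x\<in>A. leq (d x) (d one)))
       \<and> ((\<forall>x\<in>A. leq (d x) (d one)) \<longleftrightarrow> (\<forall>x\<in>A. d x = d one \<odot> x))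
       \<and> ((\<forall>x\<in>A. d x = d one \<odot> x) \<longleftrightarrow> (\<forall>x\<in>A. \<forall>y\<in>A. d (meet x y) = meet (d x) (d y)))
       \<and> ((\<forall>x\<in>A. \<forall>y\<in>A. d (meet x y) = meet (d x) (d y)) \<longleftrightarrow> (\<forall>x\<in>A. \<forall>y\<in>A. d (join x y) = join (d x) (d y)))"
proof -
  have dA: "\<And>y. y \<in> A \<Longrightarrow> d y \<in> A" using D by (simp add: odot_join_derivation_def)
  define a where "a = d one"
  have a: "a \<in> A" "a \<oplus> a = a" using B by (auto simp: a_def boolean_center_def)
  let ?P1 = "\<forall>x\<in>A. \<forall>y\<in>A. leq x y \<longrightarrow> leq (d x) (d y)"
  let ?P2 = "\<forall>x\<in>A. leq (d x) (d one)"
  let ?P3 = "\<forall>x\<in>A. d x = d one \<odot> x"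
  let ?P4 = "\<forall>x\<in>A. \<forall>y\<in>A. d (meet x y) = meet (d x) (d y)"
  let ?P5 = "\<forall>x\<in>A. \<forall>y\<in>A. d (join x y) = join (d x) (d y)"
  have 12: "?P1 \<Longrightarrow> ?P2"
  proof (intro ballI)
    fix x assume P1: ?P1 and x: "x \<in> A"
    show "leq (d x) (d one)" using P1 x leq_one[OF x] one_closed by blast
  qed
  have 23: "?P2 \<Longrightarrow> ?P3"
  proof (intro ballI)
    fix x assume P2: ?P2 and x: "x \<in> A"
    have "leq (d x) a" using P2 x unfolding a_def by blast
    then have "leq (d x) (a \<odot> x)" using x a dA deriv_le[OF D x] bool_le by simp
    moreover have "leq (a \<odot> x) (d x)" using deriv_lower[OF D x] x a odot_comm unfolding a_def by simp
    ultimately show "d x = d one \<odot> x" using a x dA leq_antisym unfolding a_def by simp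
  qed
  have 31: "?P3 \<Longrightarrow> ?P1"
  proof (intro ballI impI)
    fix x y assume P3: ?P3 and xy: "x \<in> A" "y \<in> A" "leq x y"
    have "leq (a \<odot> x) (a \<odot> y)" using odot_mono xy a by simp
    moreover have "d x = a \<odot> x" "d y = a \<odot> y" using P3 xy unfolding a_def by blast+
    ultimately show "leq (d x) (d y)" by simp
  qed
  have 34: "?P3 \<Longrightarrow> ?P4"
  proof (intro ballI)
    fix x y assume P3: ?P3 and xy: "x \<in> A" "y \<in> A"
    have "a \<odot> meet x y = meet (a \<odot> x) (a \<odot> y)" using bool_dist_meet xy a by simp
    moreover have "d x = a \<odot> x" "d y = a \<odot> y" "d (meet x y) = a \<odot> meet x y"
      using P3 xy meet_closed unfolding a_def by blast+
    ultimately show "d (meet x y) = meet (d x) (d y)" by simp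
  qed
  have 35: "?P3 \<Longrightarrow> ?P5"
  proof (intro ballI)
    fix x y assume P3: ?P3 and xy: "x \<in> A" "y \<in> A"
    have "a \<odot> join x y = join (a \<odot> x) (a \<odot> y)" using bool_dist_join xy a by simp
    moreover have "d x = a \<odot> x" "d y = a \<odot> y" "d (join x y) = a \<odot> join x y"
      using P3 xy join_closed unfolding a_def by blast+
    ultimately show "d (join x y) = join (d x) (d y)" by simp
  qed
  have 41: "?P4 \<Longrightarrow> ?P1"
  proof (intro ballI impI)
    fix x y assume P4: ?P4 and xy: "x \<in> A" "y \<in> A" "leq x y"
    have "meet x y = x" using xy leq_meet by simp
    moreover have "d (meet x y) = meet (d x) (d y)" using P4 xy by blast
    ultimately have "d x = meet (d x) (d y)" by simp
    then show "leq (d x) (d y)" using xy dA meet_le2[of "d x" "d y"] by simp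
  qed
  have 51: "?P5 \<Longrightarrow> ?P1"
  proof (intro ballI impI)
    fix x y assume P5: ?P5 and xy: "x \<in> A" "y \<in> A" "leq x y"
    have "join x y = y" using xy leq_join by simp
    moreover have "d (join x y) = join (d x) (d y)" using P5 xy by blast
    ultimately have "d y = join (d x) (d y)" by simp
    then show "leq (d x) (d y)" using xy dA join_upper1[of "d x" "d y"] by simp
  qed
  show ?thesis using 12 23 31 34 41 35 51 by blast
qed

end

theorem proposition3p20:
  assumes "mv_algebra A oplus neg zero"
    and "mv_algebra.odot_join_derivation A oplus neg d"
    and "d (mv_algebra.one neg zero) \<in> mv_algebra.boolean_center A oplus"
  shows "((\<forall>x\<in>A. \<forall>y\<in>A. mv_algebra.leq oplus neg zero x y \<longrightarrow> mv_algebra.leq oplus neg zero (d x) (d y))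
           \<longleftrightarrow> (\<forall>x\<in>A. mv_algebra.leq oplus neg zero (d x) (d (mv_algebra.one neg zero))))
       \<and> ((\<forall>x\<in>A. mv_algebra.leq oplus neg zero (d x) (d (mv_algebra.one neg zero)))
           \<longleftrightarrow> (\<forall>x\<in>A. d x = mv_algebra.odot oplus neg (d (mv_algebra.one neg zero)) x))
       \<and> ((\<forall>x\<in>A. d x = mv_algebra.odot oplus neg (d (mv_algebra.one neg zero)) x)
           \<longleftrightarrow> (\<forall>x\<in>A. \<forall>y\<in>A. d (mv_algebra.meet oplus neg x y) = mv_algebra.meet oplus neg (d x) (d y)))
       \<and> ((\<forall>x\<in>A. \<forall>y\<in>A. d (mv_algebra.meet oplus neg x y) = mv_algebra.meet oplus neg (d x) (d y))
           \<longleftrightarrow> (\<forall>x\<in>A. \<forall>y\<in>A. d (mv_algebra.join oplus neg x y) = mv_algebra.join oplus neg (d x) (d y)))"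
  using mv_algebra.main[OF assms] .

end
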